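(* Let $k\ge0$ with $k\equiv0\pmod6$ and let $j\ge1$ be an integer. Then $b_{jk}=\sum_{i=0}^{j-1}3^{\,j-i-1}\binom{j}{j-i}b_k^{\,j-i}$.
   Context: For $n=3$, define nonnegative integers $a_r,b_r,c_r$ ($r\ge0$) by $a_0=1,b_0=0,c_0=0$ and $a_r=a_{r-1}+c_{r-1}$, $b_r=b_{r-1}+a_{r-1}$, $c_r=c_{r-1}+b_{r-1}$. Equivalently, for the Ducci map $D(x_1,x_2,x_3)=(x_1+x_2,x_2+x_3,x_3+x_1)$, one has $D^r(x_1,x_2,x_3)=(a_rx_1+b_rx_2+c_rx_3,\;c_rx_1+a_rx_2+b_rx_3,\;b_rx_1+c_rx_2+a_rx_3)$. *)

theory Defs
  imports Main
begin

fun abc :: "nat \<Rightarrow> nat \<times> nat \<times> nat" where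
  "abc 0 = (1, 0, 0)"
| "abc (Suc r) = (case abc r of (a, b, c) \<Rightarrow> (a + c, b + a, c + b))"

definition ducci_a :: "nat \<Rightarrow> nat" where "ducci_a r = fst (abc r)"
definition ducci_b :: "nat \<Rightarrow> nat" where "ducci_b r = fst (snd (abc r))"
definition ducci_c :: "nat \<Rightarrow> nat" where "ducci_c r = snd (snd (abc r))"

end

theory Submission
  imports Defs
begin

fun cmul :: "nat \<times> nat \<times> nat \<Rightarrow> nat \<times> nat \<times> nat \<Rightarrow> nat \<times> nat \<times> nat" where
  "cmul (a,b,c) (a',b',c') = (a*a'+b*c'+c*b', a*b'+b*a'+c*c', a*c'+b*b'+c*a')"

lemma abc_add: "abc (m + n) = cmul (abc m) (abc n)"
proof (induction n)
  case 0
  then show ?case by (cases "abc m") auto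
next
  case (Suc n)
  obtain a b c where m: "abc m = (a,b,c)" by (cases "abc m") auto
  obtain a' b' c' where n: "abc n = (a',b',c')" by (cases "abc n") auto
  show ?case using Suc m n by (simp add: algebra_simps)
qed

lemma abc6: "\<exists>b. abc (6*q) = (b+1, b, b)"
proof (induction q)
  case 0
  then show ?case by simp
next
  case (Suc q)
  then obtain b where b: "abc (6*q) = (b+1,b,b)" by blast
  have "abc (6 * Suc q) = cmul (abc (6*q)) (abc 6)"
    using abc_add[of "6*q" 6] by (simp add: add.commute)
  also have "abc 6 = (21+1,21,21)" by (simp add: numeral_eq_Suc)
  finally have "abc (6 * Suc q) = (3*b*21+b+21+1, 3*b*21+b+21, 3*b*21+b+21)"
    using b by (simp add: algebra_simps)
  then show ?case by blast
qed

lemma key: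
  assumes "k mod 6 = 0"
  shows "3 * ducci_b (j*k) + 1 = (3 * ducci_b k + 1) ^ j"
proof -
  obtain q where q: "k = 6*q" using assms by auto
  obtain B where B: "abc k = (B+1,B,B)" using abc6[of q] q by auto
  have bk: "ducci_b k = B" using B by (simp add: ducci_b_def)
  show ?thesis
  proof (induction j)
    case 0
    then show ?case by (simp add: ducci_b_def)
  next
    case (Suc j)
    obtain b where b: "abc (j*k) = (b+1,b,b)" using abc6[of "j*q"] q
      by (auto simp: algebra_simps)
    have "abc (Suc j * k) = cmul (abc (j*k)) (abc k)"
      using abc_add[of "j*k" k] by (simp add: add.commute)
    then have "ducci_b (Suc j * k) = 3*b*B + b + B"
      using b B by (simp add: ducci_b_def algebra_simps)
    moreover have "ducci_b (j*k) = b" using b by (simp add: ducci_b_def)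
    ultimately have "3 * ducci_b (Suc j * k) + 1 = (3*b+1) * (3*B+1)"
      by (simp add: algebra_simps)
    moreover have "3*b+1 = (3*B+1)^j" using Suc bk \<open>ducci_b (j*k) = b\<close> by simp
    ultimately show ?case using bk by (metis mult.commute power_Suc)
  qed
qed

theorem lemma4p5:
  fixes k j :: nat
  assumes "k mod 6 = 0" and "j \<ge> 1"
  shows "ducci_b (j * k) = (\<Sum>i = 0..j - 1. 3 ^ (j - i - 1) * (j choose (j - i)) * ducci_b k ^ (j - i))"
proof -
  define B where "B = ducci_b k"
  have "3 * (\<Sum>i = 0..j - 1. 3 ^ (j - i - 1) * (j choose (j - i)) * B ^ (j - i))
      = (\<Sum>i = 0..j - 1. (j choose (j - i)) * (3*B) ^ (j - i))"
    unfolding sum_distrib_left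
  proof (rule sum.cong[OF refl])
    fix i assume "i \<in> {0..j-1}"
    then have "j - i = Suc (j - i - 1)" using assms(2) by auto
    then show "3 * (3 ^ (j - i - 1) * (j choose (j - i)) * B ^ (j - i)) =
          (j choose (j - i)) * (3 * B) ^ (j - i)"
      by (metis (no_types, lifting) mult.assoc mult.left_commute power_Suc power_mult_distrib)
  qed
  also have "\<dots> = (\<Sum>m = 1..j. (j choose m) * (3*B) ^ m)"
  proof (rule sum.reindex_bij_witness[where i="\<lambda>m. j - m" and j="\<lambda>i. j - i"])
  qed (use assms(2) in auto)
  also have "\<dots> + 1 = (\<Sum>m = 0..j. (j choose m) * (3*B) ^ m)"
    by (simp add: sum.atLeast_Suc_atMost)
  also have "\<dots> = (3*B+1)^j"
    using binomial_ring[of "3*B" 1 j] by (simp add: atLeast0AtMost add.commute)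
  finally show ?thesis using key[OF assms(1), of j] unfolding B_def by simp
qed

end
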